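(* With notation as in the context (type $E_6$ over $\mathbb{Z}/3$), let $\alpha$ be a positive root of $E_6$, let $s\in\{1,3,4,5,6\}$ and let $\beta\in\Delta_s^+$. Then $f(\beta)+f(\alpha)\in\Gamma_s^+$ if and only if $\beta+\alpha\in\Delta_s^+$.
   Context: Let $V=(\mathbb{Z}/3)^5$ with the standard symmetric form $\sum_i x_iy_i$. Let $\Delta$ be the root system of type $E_6$ with simple roots $\alpha_1,\dots,\alpha_6$, $\langle\alpha_i,\alpha_i\rangle=2$, $\langle\alpha_i,\alpha_j\rangle=-1$ if $\{i,j\}\in\{\{1,3\},\{3,4\},\{4,5\},\{5,6\},\{2,4\}\}$, $0$ otherwise; $\Lambda=\bigoplus\mathbb{Z}\alpha_i$, $\Delta^+$ the positive roots. Let $f:\Lambda\to V$ be the group homomorphism with $f(\alpha_1)=(1,2,0,0,0)$, $f(\alpha_2)=(0,0,0,1,2)$, $f(\alpha_3)=(0,1,2,0,0)$, $f(\alpha_4)=(0,0,1,2,0)$, $f(\alpha_5)=(0,0,0,1,1)$, $f(\alpha_6)=(1,1,1,1,1)$. For $\beta=\sum\beta^i\alpha_i\in\Delta^+$ let $m(\beta)=\max\{i:\beta^i\ne0\}$; set $\Delta_1^+=\{\alpha_1\}$, $\Delta_3^+=\{\beta: m(\beta)\in\{2,3\}\}$, $\Delta_s^+=\{\beta: m(\beta)=s\}$ for $s=4,5,6$, and $\Gamma_s^+=f(\Delta_s^+)$. *)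

theory Defs
  imports Main
begin

text \<open>Elements of the root lattice Lambda are coefficient vectors with respect to
 the simple roots alpha_1..alpha_6, stored as int lists of length 6
 (list index i-1 holds the coefficient of alpha_i).
 Elements of V = (Z/3)^5 are int lists of length 5 with entries in {0,1,2}
 (canonical representatives mod 3).\<close>

definition e6_adj :: "nat \<Rightarrow> nat \<Rightarrow> bool" where
  "e6_adj i j \<longleftrightarrow> {i, j} \<in> {{1,3},{3,4},{4,5},{5,6},{2,4}}"

definition e6_form :: "nat \<Rightarrow> nat \<Rightarrow> int" where
  "e6_form i j = (if i = j then 2 else if e6_adj i j then -1 else 0)"

definition lat_form :: "int list \<Rightarrow> int list \<Rightarrow> int" where
  "lat_form x y = (\<Sum>i\<in>{1..6}. \<Sum>j\<in>{1..6}. x!(i-1) * e6_form i j * y!(j-1))"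

definition lat_add :: "int list \<Rightarrow> int list \<Rightarrow> int list" where
  "lat_add x y = map2 (+) x y"

definition E6_roots :: "int list set" where
  "E6_roots = {b. length b = 6 \<and> lat_form b b = 2}"

definition E6_pos :: "int list set" where
  "E6_pos = {b \<in> E6_roots. \<forall>i<6. b!i \<ge> 0}"

definition fimg :: "nat \<Rightarrow> int list" where
  "fimg i = (if i = 1 then [1,2,0,0,0] else if i = 2 then [0,0,0,1,2]
     else if i = 3 then [0,1,2,0,0] else if i = 4 then [0,0,1,2,0]
     else if i = 5 then [0,0,0,1,1] else [1,1,1,1,1])"

definition fhom :: "int list \<Rightarrow> int list" where
  "fhom b = map (\<lambda>k. (\<Sum>i\<in>{1..6}. b!(i-1) * fimg i ! k) mod 3) [0..<5]"

definition V_add :: "int list \<Rightarrow> int list \<Rightarrow> int list" where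
  "V_add u v = map2 (\<lambda>a b. (a + b) mod 3) u v"

definition mroot :: "int list \<Rightarrow> nat" where
  "mroot b = Max {i \<in> {1..6}. b!(i-1) \<noteq> 0}"

definition alpha1 :: "int list" where
  "alpha1 = [1,0,0,0,0,0]"

definition Delta :: "nat \<Rightarrow> int list set" where
  "Delta s = (if s = 1 then {alpha1}
     else if s = 3 then {b \<in> E6_pos. mroot b \<in> {2,3}}
     else {b \<in> E6_pos. mroot b = s})"

definition Gamma :: "nat \<Rightarrow> int list set" where
  "Gamma s = fhom ` Delta s"

end

theory Submission
  imports Defs
begin

definition qf :: "int \<Rightarrow> int \<Rightarrow> int \<Rightarrow> int \<Rightarrow> int \<Rightarrow> int \<Rightarrow> int" where
  "qf x0 x1 x2 x3 x4 x5 = 2*(x0^2+x1^2+x2^2+x3^2+x4^2+x5^2) - 2*(x0*x2+x2*x3+x3*x4+x4*x5+x1*x3)"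

lemma lf: "lat_form [x0,x1,x2,x3,x4,x5] [x0,x1,x2,x3,x4,x5] = qf x0 x1 x2 x3 x4 x5"
  by (simp add: lat_form_def e6_form_def e6_adj_def qf_def numeral_eq_Suc doubleton_eq_iff algebra_simps power2_eq_square)

lemma sos0: "4*qf x0 x1 x2 x3 x4 x5 = 3*x0^2 + (2*((2)*x1+(-1)*x3)^2 + 2*((2)*x2+(-1)*x3+(-1)*x0)^2 + 1*((2)*x3+(-2)*x4+(-1)*x0)^2 + 1*((2)*x4+(-2)*x5+(-1)*x0)^2 + 1*((2)*x5+(-1)*x0)^2)"
  unfolding qf_def by algebra

lemma bd0: assumes "qf x0 x1 x2 x3 x4 x5 = 2" "0 \<le> x0" shows "x0 \<le> 1"
proof (rule ccontr)
  assume "\<not> x0 \<le> 1"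
  hence "x0 \<ge> 2" by simp
  hence "x0*x0 \<ge> 2*2" by (metis mult_mono order_trans zero_le_numeral mult_nonneg_nonneg order.refl)
  moreover have "3*x0^2 \<le> 4*qf x0 x1 x2 x3 x4 x5" unfolding sos0 by simp
  ultimately show False using assms(1) by (simp add: power2_eq_square)
qed

lemma sos1: "60*qf x0 x1 x2 x3 x4 x5 = 30*x1^2 + (30*((2)*x0+(-1)*x2)^2 + 10*((3)*x2+(-2)*x3)^2 + 5*((4)*x3+(-3)*x4+(-3)*x1)^2 + 3*((5)*x4+(-4)*x5+(-3)*x1)^2 + 18*((2)*x5+(-1)*x1)^2)"
  unfolding qf_def by algebra

lemma bd1: assumes "qf x0 x1 x2 x3 x4 x5 = 2" "0 \<le> x1" shows "x1 \<le> 2"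
proof (rule ccontr)
  assume "\<not> x1 \<le> 2"
  hence "x1 \<ge> 3" by simp
  hence "x1*x1 \<ge> 3*3" by (metis mult_mono order_trans zero_le_numeral mult_nonneg_nonneg order.refl)
  moreover have "30*x1^2 \<le> 60*qf x0 x1 x2 x3 x4 x5" unfolding sos1 by simp
  ultimately show False using assms(1) by (simp add: power2_eq_square)
qed

lemma sos2: "60*qf x0 x1 x2 x3 x4 x5 = 18*x2^2 + (30*((2)*x0+(-1)*x2)^2 + 30*((2)*x1+(-1)*x3)^2 + 10*((3)*x3+(-2)*x4+(-2)*x2)^2 + 5*((4)*x4+(-3)*x5+(-2)*x2)^2 + 3*((5)*x5+(-2)*x2)^2)"
  unfolding qf_def by algebra

lemma bd2: assumes "qf x0 x1 x2 x3 x4 x5 = 2" "0 \<le> x2" shows "x2 \<le> 2"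
proof (rule ccontr)
  assume "\<not> x2 \<le> 2"
  hence "x2 \<ge> 3" by simp
  hence "x2*x2 \<ge> 3*3" by (metis mult_mono order_trans zero_le_numeral mult_nonneg_nonneg order.refl)
  moreover have "18*x2^2 \<le> 60*qf x0 x1 x2 x3 x4 x5" unfolding sos2 by simp
  ultimately show False using assms(1) by (simp add: power2_eq_square)
qed

lemma sos3: "6*qf x0 x1 x2 x3 x4 x5 = 1*x3^2 + (3*((2)*x0+(-1)*x2)^2 + 3*((2)*x1+(-1)*x3)^2 + 1*((3)*x2+(-2)*x3)^2 + 3*((2)*x4+(-1)*x5+(-1)*x3)^2 + 1*((3)*x5+(-1)*x3)^2)"
  unfolding qf_def by algebra

lemma bd3: assumes "qf x0 x1 x2 x3 x4 x5 = 2" "0 \<le> x3" shows "x3 \<le> 3"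
proof (rule ccontr)
  assume "\<not> x3 \<le> 3"
  hence "x3 \<ge> 4" by simp
  hence "x3*x3 \<ge> 4*4" by (metis mult_mono order_trans zero_le_numeral mult_nonneg_nonneg order.refl)
  moreover have "1*x3^2 \<le> 6*qf x0 x1 x2 x3 x4 x5" unfolding sos3 by simp
  ultimately show False using assms(1) by (simp add: power2_eq_square)
qed

lemma sos4: "30*qf x0 x1 x2 x3 x4 x5 = 9*x4^2 + (15*((2)*x0+(-1)*x2)^2 + 15*((2)*x1+(-1)*x3)^2 + 5*((3)*x2+(-2)*x3)^2 + 1*((5)*x3+(-6)*x4)^2 + 15*((2)*x5+(-1)*x4)^2)"
  unfolding qf_def by algebra

lemma bd4: assumes "qf x0 x1 x2 x3 x4 x5 = 2" "0 \<le> x4" shows "x4 \<le> 2"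
proof (rule ccontr)
  assume "\<not> x4 \<le> 2"
  hence "x4 \<ge> 3" by simp
  hence "x4*x4 \<ge> 3*3" by (metis mult_mono order_trans zero_le_numeral mult_nonneg_nonneg order.refl)
  moreover have "9*x4^2 \<le> 30*qf x0 x1 x2 x3 x4 x5" unfolding sos4 by simp
  ultimately show False using assms(1) by (simp add: power2_eq_square)
qed

lemma sos5: "60*qf x0 x1 x2 x3 x4 x5 = 45*x5^2 + (30*((2)*x0+(-1)*x2)^2 + 30*((2)*x1+(-1)*x3)^2 + 10*((3)*x2+(-2)*x3)^2 + 2*((5)*x3+(-6)*x4)^2 + 3*((4)*x4+(-5)*x5)^2)"
  unfolding qf_def by algebra

lemma bd5: assumes "qf x0 x1 x2 x3 x4 x5 = 2" "0 \<le> x5" shows "x5 \<le> 1"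
proof (rule ccontr)
  assume "\<not> x5 \<le> 1"
  hence "x5 \<ge> 2" by simp
  hence "x5*x5 \<ge> 2*2" by (metis mult_mono order_trans zero_le_numeral mult_nonneg_nonneg order.refl)
  moreover have "45*x5^2 \<le> 60*qf x0 x1 x2 x3 x4 x5" unfolding sos5 by simp
  ultimately show False using assms(1) by (simp add: power2_eq_square)
qed

definition posL :: "int list list" where "posL = [[0,0,0,0,0,1], [0,0,0,0,1,0], [0,0,0,0,1,1], [0,0,0,1,0,0], [0,0,0,1,1,0], [0,0,0,1,1,1], [0,0,1,0,0,0], [0,0,1,1,0,0], [0,0,1,1,1,0], [0,0,1,1,1,1], [0,1,0,0,0,0], [0,1,0,1,0,0], [0,1,0,1,1,0], [0,1,0,1,1,1], [0,1,1,1,0,0], [0,1,1,1,1,0], [0,1,1,1,1,1], [0,1,1,2,1,0], [0,1,1,2,1,1], [0,1,1,2,2,1], [1,0,0,0,0,0], [1,0,1,0,0,0], [1,0,1,1,0,0], [1,0,1,1,1,0], [1,0,1,1,1,1], [1,1,1,1,0,0], [1,1,1,1,1,0], [1,1,1,1,1,1], [1,1,1,2,1,0], [1,1,1,2,1,1], [1,1,1,2,2,1], [1,1,2,2,1,0], [1,1,2,2,1,1], [1,1,2,2,2,1], [1,1,2,3,2,1], [1,2,2,3,2,1]]"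

lemma cases_int: "0 \<le> (x::int) \<Longrightarrow> x \<le> 3 \<Longrightarrow> x = 0 \<or> x = 1 \<or> x = 2 \<or> x = 3" by arith
lemma cases_int2: "0 \<le> (x::int) \<Longrightarrow> x \<le> 2 \<Longrightarrow> x = 0 \<or> x = 1 \<or> x = 2" by arith
lemma cases_int1: "0 \<le> (x::int) \<Longrightarrow> x \<le> 1 \<Longrightarrow> x = 0 \<or> x = 1" by arith

lemma pos_sub: assumes "qf x0 x1 x2 x3 x4 x5 = 2" "0\<le>x0" "0\<le>x1" "0\<le>x2" "0\<le>x3" "0\<le>x4" "0\<le>x5"
  shows "[x0,x1,x2,x3,x4,x5] \<in> set posL"
proof -
  have "x0 = 0 \<or> x0 = 1" using cases_int1 bd0 assms by blast
  moreover have "x1 = 0 \<or> x1 = 1 \<or> x1 = 2" using cases_int2 bd1 assms by blast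
  moreover have "x2 = 0 \<or> x2 = 1 \<or> x2 = 2" using cases_int2 bd2 assms by blast
  moreover have "x3 = 0 \<or> x3 = 1 \<or> x3 = 2 \<or> x3 = 3" using cases_int bd3 assms by blast
  moreover have "x4 = 0 \<or> x4 = 1 \<or> x4 = 2" using cases_int2 bd4 assms by blast
  moreover have "x5 = 0 \<or> x5 = 1" using cases_int1 bd5 assms by blast
  ultimately show ?thesis using assms(1) unfolding posL_def qf_def
    by (elim disjE; simp)
qed

lemma E6_pos_eq: "E6_pos = set posL"
proof
  show "E6_pos \<subseteq> set posL"
  proof
    fix b assume b: "b \<in> E6_pos"
    hence "length b = 6" by (simp add: E6_pos_def E6_roots_def)
    then obtain x0 x1 x2 x3 x4 x5 where bb: "b = [x0,x1,x2,x3,x4,x5]"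
      by (auto simp: numeral_eq_Suc length_Suc_conv)
    have nn: "\<forall>i<6. b!i \<ge> 0" using b by (simp add: E6_pos_def)
    have "qf x0 x1 x2 x3 x4 x5 = 2" using b bb lf by (simp add: E6_pos_def E6_roots_def)
    moreover have "0\<le>x0" "0\<le>x1" "0\<le>x2" "0\<le>x3" "0\<le>x4" "0\<le>x5"
      using nn unfolding bb by (auto simp: All_less_Suc numeral_eq_Suc)
    ultimately show "b \<in> set posL" using pos_sub bb by simp
  qed
next
  show "set posL \<subseteq> E6_pos"
    unfolding posL_def by (simp add: E6_pos_def E6_roots_def lf qf_def All_less_Suc numeral_eq_Suc)
qed

lemma filt: "{b \<in> set L. P b} = set (filter P L)" by auto

lemma u7: "[1..<7] = [1,2,3,4,5,6::nat]" by (simp add: upt_rec)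
lemma i7: "{1..6::nat} = {1..<7}" by auto
lemma mroot_eq: "mroot b = Max (set (filter (\<lambda>i. b!(i-1) \<noteq> 0) [1,2,3,4,5,6]))"
  unfolding mroot_def u7[symmetric] set_filter set_upt i7 ..

lemma fhom_eq: "fhom [x0,x1,x2,x3,x4,x5] = [(x0*1+x1*0+x2*0+x3*0+x4*0+x5*1) mod 3, (x0*2+x1*0+x2*1+x3*0+x4*0+x5*1) mod 3, (x0*0+x1*0+x2*2+x3*1+x4*0+x5*1) mod 3, (x0*0+x1*1+x2*0+x3*2+x4*1+x5*1) mod 3, (x0*0+x1*2+x2*0+x3*0+x4*1+x5*1) mod 3]"
  by (simp add: fhom_def fimg_def numeral_eq_Suc upt_rec algebra_simps)

lemma fv0: "fhom [0,0,0,0,0,1] = [1,1,1,1,1]" by (simp add: fhom_eq)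
lemma fv1: "fhom [0,0,0,0,1,0] = [0,0,0,1,1]" by (simp add: fhom_eq)
lemma fv2: "fhom [0,0,0,0,1,1] = [1,1,1,2,2]" by (simp add: fhom_eq)
lemma fv3: "fhom [0,0,0,1,0,0] = [0,0,1,2,0]" by (simp add: fhom_eq)
lemma fv4: "fhom [0,0,0,1,1,0] = [0,0,1,0,1]" by (simp add: fhom_eq)
lemma fv5: "fhom [0,0,0,1,1,1] = [1,1,2,1,2]" by (simp add: fhom_eq)
lemma fv6: "fhom [0,0,1,0,0,0] = [0,1,2,0,0]" by (simp add: fhom_eq)
lemma fv7: "fhom [0,0,1,1,0,0] = [0,1,0,2,0]" by (simp add: fhom_eq)
lemma fv8: "fhom [0,0,1,1,1,0] = [0,1,0,0,1]" by (simp add: fhom_eq)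
lemma fv9: "fhom [0,0,1,1,1,1] = [1,2,1,1,2]" by (simp add: fhom_eq)
lemma fv10: "fhom [0,1,0,0,0,0] = [0,0,0,1,2]" by (simp add: fhom_eq)
lemma fv11: "fhom [0,1,0,1,0,0] = [0,0,1,0,2]" by (simp add: fhom_eq)
lemma fv12: "fhom [0,1,0,1,1,0] = [0,0,1,1,0]" by (simp add: fhom_eq)
lemma fv13: "fhom [0,1,0,1,1,1] = [1,1,2,2,1]" by (simp add: fhom_eq)
lemma fv14: "fhom [0,1,1,1,0,0] = [0,1,0,0,2]" by (simp add: fhom_eq)
lemma fv15: "fhom [0,1,1,1,1,0] = [0,1,0,1,0]" by (simp add: fhom_eq)
lemma fv16: "fhom [0,1,1,1,1,1] = [1,2,1,2,1]" by (simp add: fhom_eq)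
lemma fv17: "fhom [0,1,1,2,1,0] = [0,1,1,0,0]" by (simp add: fhom_eq)
lemma fv18: "fhom [0,1,1,2,1,1] = [1,2,2,1,1]" by (simp add: fhom_eq)
lemma fv19: "fhom [0,1,1,2,2,1] = [1,2,2,2,2]" by (simp add: fhom_eq)
lemma fv20: "fhom [1,0,0,0,0,0] = [1,2,0,0,0]" by (simp add: fhom_eq)
lemma fv21: "fhom [1,0,1,0,0,0] = [1,0,2,0,0]" by (simp add: fhom_eq)
lemma fv22: "fhom [1,0,1,1,0,0] = [1,0,0,2,0]" by (simp add: fhom_eq)
lemma fv23: "fhom [1,0,1,1,1,0] = [1,0,0,0,1]" by (simp add: fhom_eq)
lemma fv24: "fhom [1,0,1,1,1,1] = [2,1,1,1,2]" by (simp add: fhom_eq)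
lemma fv25: "fhom [1,1,1,1,0,0] = [1,0,0,0,2]" by (simp add: fhom_eq)
lemma fv26: "fhom [1,1,1,1,1,0] = [1,0,0,1,0]" by (simp add: fhom_eq)
lemma fv27: "fhom [1,1,1,1,1,1] = [2,1,1,2,1]" by (simp add: fhom_eq)
lemma fv28: "fhom [1,1,1,2,1,0] = [1,0,1,0,0]" by (simp add: fhom_eq)
lemma fv29: "fhom [1,1,1,2,1,1] = [2,1,2,1,1]" by (simp add: fhom_eq)
lemma fv30: "fhom [1,1,1,2,2,1] = [2,1,2,2,2]" by (simp add: fhom_eq)
lemma fv31: "fhom [1,1,2,2,1,0] = [1,1,0,0,0]" by (simp add: fhom_eq)
lemma fv32: "fhom [1,1,2,2,1,1] = [2,2,1,1,1]" by (simp add: fhom_eq)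
lemma fv33: "fhom [1,1,2,2,2,1] = [2,2,1,2,2]" by (simp add: fhom_eq)
lemma fv34: "fhom [1,1,2,3,2,1] = [2,2,2,1,2]" by (simp add: fhom_eq)
lemma fv35: "fhom [1,2,2,3,2,1] = [2,2,2,2,1]" by (simp add: fhom_eq)
lemmas fv = fv0 fv1 fv2 fv3 fv4 fv5 fv6 fv7 fv8 fv9 fv10 fv11 fv12 fv13 fv14 fv15 fv16 fv17 fv18 fv19 fv20 fv21 fv22 fv23 fv24 fv25 fv26 fv27 fv28 fv29 fv30 fv31 fv32 fv33 fv34 fv35

lemma D1: "Delta 1 = set [[1,0,0,0,0,0]]"
  unfolding Delta_def E6_pos_eq filt by (simp add: posL_def mroot_eq alpha1_def)

lemma D3: "Delta 3 = set [[0,0,1,0,0,0], [0,1,0,0,0,0], [1,0,1,0,0,0]]"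
  unfolding Delta_def E6_pos_eq filt by (simp add: posL_def mroot_eq alpha1_def)

lemma D4: "Delta 4 = set [[0,0,0,1,0,0], [0,0,1,1,0,0], [0,1,0,1,0,0], [0,1,1,1,0,0], [1,0,1,1,0,0], [1,1,1,1,0,0]]"
  unfolding Delta_def E6_pos_eq filt by (simp add: posL_def mroot_eq alpha1_def)

lemma D5: "Delta 5 = set [[0,0,0,0,1,0], [0,0,0,1,1,0], [0,0,1,1,1,0], [0,1,0,1,1,0], [0,1,1,1,1,0], [0,1,1,2,1,0], [1,0,1,1,1,0], [1,1,1,1,1,0], [1,1,1,2,1,0], [1,1,2,2,1,0]]"
  unfolding Delta_def E6_pos_eq filt by (simp add: posL_def mroot_eq alpha1_def)

lemma D6: "Delta 6 = set [[0,0,0,0,0,1], [0,0,0,0,1,1], [0,0,0,1,1,1], [0,0,1,1,1,1], [0,1,0,1,1,1], [0,1,1,1,1,1], [0,1,1,2,1,1], [0,1,1,2,2,1], [1,0,1,1,1,1], [1,1,1,1,1,1], [1,1,1,2,1,1], [1,1,1,2,2,1], [1,1,2,2,1,1], [1,1,2,2,2,1], [1,1,2,3,2,1], [1,2,2,3,2,1]]"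
  unfolding Delta_def E6_pos_eq filt by (simp add: posL_def mroot_eq alpha1_def)

theorem mainTheorem17:
  fixes a b :: "int list" and s :: nat
  assumes "a \<in> E6_pos" and "s \<in> {1,3,4,5,6}" and "b \<in> Delta s"
  shows "V_add (fhom b) (fhom a) \<in> Gamma s \<longleftrightarrow> lat_add b a \<in> Delta s"
proof -
  have a: "a \<in> set posL" using assms(1) E6_pos_eq by simp
  from assms(2) show ?thesis
  proof (elim insertE emptyE)

    assume s: "s = 1"
    have "\<forall>a\<in>set posL. \<forall>b\<in>Delta 1. (V_add (fhom b) (fhom a) \<in> Gamma 1 \<longleftrightarrow> lat_add b a \<in> Delta 1)"
      unfolding Gamma_def D1 posL_def image_set by code_simp
    then show ?thesis using a assms(3) s by blast
  next

    assume s: "s = 3"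
    have "\<forall>a\<in>set posL. \<forall>b\<in>Delta 3. (V_add (fhom b) (fhom a) \<in> Gamma 3 \<longleftrightarrow> lat_add b a \<in> Delta 3)"
      unfolding Gamma_def D3 posL_def image_set by code_simp
    then show ?thesis using a assms(3) s by blast
  next

    assume s: "s = 4"
    have "\<forall>a\<in>set posL. \<forall>b\<in>Delta 4. (V_add (fhom b) (fhom a) \<in> Gamma 4 \<longleftrightarrow> lat_add b a \<in> Delta 4)"
      unfolding Gamma_def D4 posL_def image_set by code_simp
    then show ?thesis using a assms(3) s by blast
  next

    assume s: "s = 5"
    have "\<forall>a\<in>set posL. \<forall>b\<in>Delta 5. (V_add (fhom b) (fhom a) \<in> Gamma 5 \<longleftrightarrow> lat_add b a \<in> Delta 5)"
      unfolding Gamma_def D5 posL_def image_set by code_simp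
    then show ?thesis using a assms(3) s by blast
  next

    assume s: "s = 6"
    have "\<forall>a\<in>set posL. \<forall>b\<in>Delta 6. (V_add (fhom b) (fhom a) \<in> Gamma 6 \<longleftrightarrow> lat_add b a \<in> Delta 6)"
      unfolding Gamma_def D6 posL_def image_set by code_simp
    then show ?thesis using a assms(3) s by blast
  qed
qed

end
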